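(* For a $K$-armed bandit with rewards $r\in\mathbb{R}^K$, a full-support softmax policy $\pi=\pi_\theta$, temperature $\eta>0$ and step size $\alpha>0$, let $\theta'(a)=\theta(a)+\alpha w(a)U(a)$ and $\pi'=\pi_{\theta'}$. Then, with $V=\pi^\top r$, $V'=\pi'^\top r$ and $Z=\sum_{a'}\pi(a')e^{\alpha w(a')U(a')}$, \[ V'-V=\frac1Z\sum_{a=1}^K\pi(a)U(a)\big(e^{\alpha w(a)U(a)}-1\big)\;\ge\;0. \]
   Context: $\pi_\theta(a)=e^{\theta(a)}/\sum_{a'}e^{\theta(a')}$; $U(a):=r(a)-\pi^\top r$; $\ell(a):=-\log\pi(a)$; DG gate $w(a):=\sigma(U(a)\ell(a)/\eta)$ with $\sigma(x)=1/(1+e^{-x})$. *)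

theory Defs
  imports "HOL-Analysis.Analysis"
begin

text \<open>K-armed bandit: arms form a finite type 'a (so K = CARD('a) >= 1).\<close>

definition softmax :: "('a::finite \<Rightarrow> real) \<Rightarrow> 'a \<Rightarrow> real" where
  "softmax \<theta> a = exp (\<theta> a) / (\<Sum>a'\<in>UNIV. exp (\<theta> a'))"

definition value_of :: "('a::finite \<Rightarrow> real) \<Rightarrow> ('a \<Rightarrow> real) \<Rightarrow> real" where
  "value_of \<pi> r = (\<Sum>a\<in>UNIV. \<pi> a * r a)"

definition adv :: "('a::finite \<Rightarrow> real) \<Rightarrow> ('a \<Rightarrow> real) \<Rightarrow> 'a \<Rightarrow> real" where
  "adv \<pi> r a = r a - value_of \<pi> r"

definition surprisal :: "('a \<Rightarrow> real) \<Rightarrow> 'a \<Rightarrow> real" where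
  "surprisal \<pi> a = - ln (\<pi> a)"

definition sigmoid :: "real \<Rightarrow> real" where
  "sigmoid x = 1 / (1 + exp (- x))"

definition gate :: "real \<Rightarrow> ('a::finite \<Rightarrow> real) \<Rightarrow> ('a \<Rightarrow> real) \<Rightarrow> 'a \<Rightarrow> real" where
  "gate \<eta> \<pi> r a = sigmoid (adv \<pi> r a * surprisal \<pi> a / \<eta>)"

end

theory Submission
  imports Defs
begin

theorem lemma8:
  fixes \<theta> r :: "'a::finite \<Rightarrow> real" and \<eta> \<alpha> :: real
  assumes "\<eta> > 0" and "\<alpha> > 0"
  defines "\<pi> \<equiv> softmax \<theta>"
  defines "\<theta>' \<equiv> (\<lambda>a. \<theta> a + \<alpha> * gate \<eta> \<pi> r a * adv \<pi> r a)"
  defines "\<pi>' \<equiv> softmax \<theta>'"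
  defines "Z \<equiv> (\<Sum>a'\<in>UNIV. \<pi> a' * exp (\<alpha> * gate \<eta> \<pi> r a' * adv \<pi> r a'))"
  shows "value_of \<pi>' r - value_of \<pi> r
           = (1 / Z) * (\<Sum>a\<in>UNIV. \<pi> a * adv \<pi> r a * (exp (\<alpha> * gate \<eta> \<pi> r a * adv \<pi> r a) - 1))
         \<and> (1 / Z) * (\<Sum>a\<in>UNIV. \<pi> a * adv \<pi> r a * (exp (\<alpha> * gate \<eta> \<pi> r a * adv \<pi> r a) - 1)) \<ge> 0"
proof -
  define S where "S = (\<Sum>a\<in>UNIV. exp (\<theta> a))"
  define e where "e = (\<lambda>a. exp (\<alpha> * gate \<eta> \<pi> r a * adv \<pi> r a))"
  define U where "U = adv \<pi> r"
  define V where "V = value_of \<pi> r"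
  have Spos: "S > 0" unfolding S_def
    by (rule sum_pos) auto
  have pi: "\<pi> a = exp (\<theta> a) / S" for a unfolding \<pi>_def softmax_def S_def by simp
  have pipos: "\<pi> a > 0" for a using Spos pi by simp
  have epos: "e a > 0" for a unfolding e_def by simp
  have sum1: "(\<Sum>a\<in>UNIV. \<pi> a) = 1"
    using Spos by (simp add: pi sum_divide_distrib[symmetric] S_def)
  have Zeq: "Z = (\<Sum>a\<in>UNIV. exp (\<theta> a) * e a) / S"
    unfolding Z_def e_def by (simp add: pi sum_divide_distrib)
  have Zpos: "Z > 0" unfolding Z_def
    by (rule sum_pos) (auto intro: pipos mult_pos_pos)
  have Ze: "Z = (\<Sum>a\<in>UNIV. \<pi> a * e a)" unfolding Z_def e_def by simp
  have th': "exp (\<theta>' a) = exp (\<theta> a) * e a" for a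
    unfolding \<theta>'_def e_def by (simp add: exp_add)
  have pi': "\<pi>' a = \<pi> a * e a / Z" for a
    unfolding \<pi>'_def softmax_def th' using Spos Zpos
    by (simp add: Zeq pi)
  have sumU: "(\<Sum>a\<in>UNIV. \<pi> a * U a) = 0"
    unfolding U_def adv_def
    by (simp add: right_diff_distrib sum_subtractf sum_distrib_right[symmetric] sum1 value_of_def)
  have "value_of \<pi>' r - V = (\<Sum>a\<in>UNIV. \<pi> a * e a * r a) / Z - V * (Z / Z)"
    unfolding value_of_def pi' using Zpos by (simp add: sum_divide_distrib)
  also have "\<dots> = ((\<Sum>a\<in>UNIV. \<pi> a * e a * r a) - V * Z) / Z"
    using Zpos by (simp add: field_simps)
  also have "(\<Sum>a\<in>UNIV. \<pi> a * e a * r a) - V * Z = (\<Sum>a\<in>UNIV. \<pi> a * U a * e a)"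
    unfolding Ze U_def adv_def V_def
    by (simp add: sum_distrib_left sum_subtractf[symmetric] algebra_simps)
  also have "(\<Sum>a\<in>UNIV. \<pi> a * U a * e a) = (\<Sum>a\<in>UNIV. \<pi> a * U a * (e a - 1))"
    using sumU by (simp add: right_diff_distrib sum_subtractf)
  finally have eq: "value_of \<pi>' r - V = (1/Z) * (\<Sum>a\<in>UNIV. \<pi> a * U a * (e a - 1))" by simp
  have nn: "U a * (e a - 1) \<ge> 0" for a
  proof -
    have g: "gate \<eta> \<pi> r a > 0" unfolding gate_def sigmoid_def
      by (simp add: add_pos_pos)
    show ?thesis
    proof (cases "U a \<ge> 0")
      case True
      then have "\<alpha> * gate \<eta> \<pi> r a * U a \<ge> 0" using g assms by simp
      then have "e a \<ge> 1" unfolding e_def U_def by simp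
      then show ?thesis using True by simp
    next
      case False
      then have "\<alpha> * gate \<eta> \<pi> r a * U a \<le> 0" using g assms
        by (simp add: mult_nonneg_nonpos)
      then have "e a \<le> 1" unfolding e_def U_def by simp
      then show ?thesis using False by (simp add: mult_nonpos_nonpos)
    qed
  qed
  have "(1/Z) * (\<Sum>a\<in>UNIV. \<pi> a * U a * (e a - 1)) \<ge> 0"
  proof (rule mult_nonneg_nonneg, simp add: Zpos less_imp_le, rule sum_nonneg)
    fix a show "0 \<le> \<pi> a * U a * (e a - 1)"
      using mult_nonneg_nonneg[OF less_imp_le[OF pipos[of a]] nn[of a]] by (simp add: mult.assoc)
  qed
  with eq show ?thesis unfolding e_def U_def V_def by simp
qed

end
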